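(* Let $\mu\in\mathcal{M}'$. Then there exists an $S$-valued process $(\mathbf{t}_n)_{n\ge1}$, possibly defined on an enlargement of the probability space carrying $(\mathbf{s}_n)_{n\ge1}$, such that: (P1) the law of the sequence $(\mathbf{t}_n)_n$ equals the law of the sequence $(\mathbf{s}_n)_n$; (P2) for each $n$, the law of the pair $(\mathbf{s}_n,\mathbf{t}_n)$ is $\mu$; (P3) for each $n$, the conditional law of $\mathbf{s}_n$ given $(\mathbf{t}_1,\dots,\mathbf{t}_n)$ is $\mu(\cdot\mid\mathbf{t}_n)$; (P4) for each $n$, conditional on $\mathbf{s}_n$, the vector $(\mathbf{t}_1,\dots,\mathbf{t}_n)$ is independent of $(\mathbf{s}_{n+1},\mathbf{s}_{n+2},\dots)$.
   Context: $S$ is a finite set and $T$ a copy of $S$. $(\mathbf{s}_n)_{n\ge1}$ is an irreducible aperiodic Markov chain on $S$ with transition function $p(\cdot\mid\cdot)$, invariant measure $m$ (full support), and $\mathbf{s}_1\sim m$. $\mathcal{M}$ is the set of probability distributions $\mu$ on $S\times T$ both of whose marginals equal $m$; $\mu(s\mid t)=\mu(s,t)/m(t)$. $\mathcal{M}'$ is the set of $\mu\in\mathcal{M}$ such that for every $(s,t)\in S\times T$, $\sum_{s'\in S}\mu(s'\mid t)p(s\mid s')=\sum_{t'\in T}\mu(s\mid t')p(t'\mid t)$. *)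

theory Defs
  imports "HOL-Probability.Probability"
begin

text \<open>Convention: Ptr x y is the transition probability p(y | x) from state x to state y.
  Time is indexed from 0: index i in Isabelle corresponds to time i+1 in the paper.\<close>

definition stochastic :: "('s::finite \<Rightarrow> 's \<Rightarrow> real) \<Rightarrow> bool" where
  "stochastic Ptr \<longleftrightarrow> (\<forall>x y. 0 \<le> Ptr x y) \<and> (\<forall>x. (\<Sum>y\<in>UNIV. Ptr x y) = 1)"

fun nstep :: "('s::finite \<Rightarrow> 's \<Rightarrow> real) \<Rightarrow> nat \<Rightarrow> 's \<Rightarrow> 's \<Rightarrow> real" where
  "nstep Ptr 0 x y = (if x = y then 1 else 0)"
| "nstep Ptr (Suc n) x y = (\<Sum>z\<in>UNIV. nstep Ptr n x z * Ptr z y)"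

definition irreducible_chain :: "('s::finite \<Rightarrow> 's \<Rightarrow> real) \<Rightarrow> bool" where
  "irreducible_chain Ptr \<longleftrightarrow> (\<forall>x y. \<exists>n. nstep Ptr n x y > 0)"

definition aperiodic_chain :: "('s::finite \<Rightarrow> 's \<Rightarrow> real) \<Rightarrow> bool" where
  "aperiodic_chain Ptr \<longleftrightarrow> (\<forall>x. Gcd {n. n > 0 \<and> nstep Ptr n x x > 0} = 1)"

definition invariant_distr :: "('s::finite \<Rightarrow> 's \<Rightarrow> real) \<Rightarrow> ('s \<Rightarrow> real) \<Rightarrow> bool" where
  "invariant_distr Ptr m \<longleftrightarrow> (\<forall>x. 0 \<le> m x) \<and> (\<Sum>x\<in>UNIV. m x) = 1
     \<and> (\<forall>y. (\<Sum>x\<in>UNIV. m x * Ptr x y) = m y)"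

definition markov_chain_law ::
  "'w measure \<Rightarrow> (nat \<Rightarrow> 'w \<Rightarrow> 's::finite) \<Rightarrow> ('s \<Rightarrow> 's \<Rightarrow> real) \<Rightarrow> ('s \<Rightarrow> real) \<Rightarrow> bool" where
  "markov_chain_law M s Ptr m \<longleftrightarrow>
     (\<forall>n (a::nat \<Rightarrow> 's). measure M {\<omega>\<in>space M. \<forall>i\<le>n. s i \<omega> = a i}
        = m (a 0) * (\<Prod>i<n. Ptr (a i) (a (Suc i))))"

definition couplings :: "('s::finite \<Rightarrow> real) \<Rightarrow> ('s \<Rightarrow> 's \<Rightarrow> real) set" where
  "couplings m = {mu. (\<forall>a b. 0 \<le> mu a b) \<and> (\<Sum>a\<in>UNIV. \<Sum>b\<in>UNIV. mu a b) = 1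
      \<and> (\<forall>a. (\<Sum>b\<in>UNIV. mu a b) = m a) \<and> (\<forall>b. (\<Sum>a\<in>UNIV. mu a b) = m b)}"

definition cond_mu :: "('s \<Rightarrow> 's \<Rightarrow> real) \<Rightarrow> ('s \<Rightarrow> real) \<Rightarrow> 's \<Rightarrow> 's \<Rightarrow> real" where
  "cond_mu mu m a b = mu a b / m b"

definition couplings' :: "('s::finite \<Rightarrow> 's \<Rightarrow> real) \<Rightarrow> ('s \<Rightarrow> real) \<Rightarrow> ('s \<Rightarrow> 's \<Rightarrow> real) set" where
  "couplings' Ptr m = {mu \<in> couplings m. \<forall>a b.
      (\<Sum>a'\<in>UNIV. cond_mu mu m a' b * Ptr a' a) = (\<Sum>b'\<in>UNIV. cond_mu mu m a b' * Ptr b b')}"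

definition cond_law_prop ::
  "'w measure \<Rightarrow> (nat \<Rightarrow> 'w \<Rightarrow> 's::finite) \<Rightarrow> (nat \<Rightarrow> 'w \<Rightarrow> 's) \<Rightarrow> ('s \<Rightarrow> 's \<Rightarrow> real) \<Rightarrow> ('s \<Rightarrow> real) \<Rightarrow> bool" where
  "cond_law_prop M S T mu m \<longleftrightarrow>
     (\<forall>n a (b::nat \<Rightarrow> 's).
        measure M {\<omega>\<in>space M. S n \<omega> = a \<and> (\<forall>i\<le>n. T i \<omega> = b i)}
        = cond_mu mu m a (b n) * measure M {\<omega>\<in>space M. \<forall>i\<le>n. T i \<omega> = b i})"

text \<open>(P4): given S n, (T 0,...,T n) is independent of (S (n+1), S (n+2), ...),
  expressed on cylinder events (which generate the future sigma-algebra).\<close>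
definition cond_indep_prop ::
  "'w measure \<Rightarrow> (nat \<Rightarrow> 'w \<Rightarrow> 's::finite) \<Rightarrow> (nat \<Rightarrow> 'w \<Rightarrow> 's) \<Rightarrow> bool" where
  "cond_indep_prop M S T \<longleftrightarrow>
     (\<forall>n k a (b::nat \<Rightarrow> 's) (c::nat \<Rightarrow> 's).
        measure M {\<omega>\<in>space M. S n \<omega> = a \<and> (\<forall>i\<le>n. T i \<omega> = b i) \<and> (\<forall>j<k. S (Suc n + j) \<omega> = c j)}
          * measure M {\<omega>\<in>space M. S n \<omega> = a}
        = measure M {\<omega>\<in>space M. S n \<omega> = a \<and> (\<forall>i\<le>n. T i \<omega> = b i)}
          * measure M {\<omega>\<in>space M. S n \<omega> = a \<and> (\<forall>j<k. S (Suc n + j) \<omega> = c j)})"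

end

theory Submission
  imports Defs
begin

lemma pmf_embed_finite:
  fixes f :: "'a::finite \<Rightarrow> real"
  assumes "\<And>x. 0 \<le> f x" "(\<Sum>x\<in>UNIV. f x) = 1"
  shows "pmf (embed_pmf f) x = f x"
proof (rule pmf_embed_pmf)
  show "\<And>x. 0 \<le> f x" by fact
  have "(\<integral>\<^sup>+x. ennreal (f x) \<partial>count_space UNIV) = (\<Sum>x\<in>UNIV. ennreal (f x))"
    by (simp add: nn_integral_count_space_finite)
  also have "\<dots> = ennreal (\<Sum>x\<in>UNIV. f x)" using assms(1) by (simp add: sum_ennreal)
  finally show "(\<integral>\<^sup>+x. ennreal (f x) \<partial>count_space UNIV) = 1" using assms(2) by simp
qed

primrec tt :: "(nat \<Rightarrow> 'w \<Rightarrow> 's::finite) \<Rightarrow> nat \<Rightarrow> 'w \<times> (nat \<Rightarrow> 's) \<Rightarrow> 's" where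
  "tt s 0 z = snd z (to_nat (0::nat, s 0 (fst z), s 0 (fst z)))"
| "tt s (Suc n) z = snd z (to_nat (Suc n, tt s n z, s (Suc n) (fst z)))"

locale L7 =
  fixes Ptr :: "'s::finite \<Rightarrow> 's \<Rightarrow> real" and m :: "'s \<Rightarrow> real"
    and mu :: "'s \<Rightarrow> 's \<Rightarrow> real"
    and M0 :: "'w measure" and s :: "nat \<Rightarrow> 'w \<Rightarrow> 's"
  assumes st: "stochastic Ptr"
    and inv: "invariant_distr Ptr m" and mpos: "\<forall>x. m x > 0"
    and P0: "prob_space M0"
    and smeas: "\<forall>n. s n \<in> measurable M0 (count_space UNIV)"
    and chain: "markov_chain_law M0 s Ptr m"
    and mu: "mu \<in> couplings' Ptr m"
begin

definition cm where "cm a b = cond_mu mu m a b"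
definition D where "D b a = (\<Sum>b'\<in>UNIV. cm a b' * Ptr b b')"
definition Q0 where "Q0 a = embed_pmf (\<lambda>b. mu a b / m a)"
definition Q1 where "Q1 b a = (if D b a > 0 then embed_pmf (\<lambda>b'. Ptr b b' * cm a b' / D b a) else return_pmf b)"
definition Q :: "nat \<times> 's \<times> 's \<Rightarrow> 's pmf" where
  "Q t = (case t of (0, a, _) \<Rightarrow> Q0 a | (Suc _, b, a) \<Rightarrow> Q1 b a)"

lemma Pnn: "0 \<le> Ptr x y" using st by (simp add: stochastic_def)
lemma Psum: "(\<Sum>y\<in>UNIV. Ptr x y) = 1" using st by (simp add: stochastic_def)
lemma mnn: "0 < m x" using mpos by simp
lemma minv: "(\<Sum>x\<in>UNIV. m x * Ptr x y) = m y" using inv by (simp add: invariant_distr_def)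
lemma munn: "0 \<le> mu a b" using mu by (simp add: couplings'_def couplings_def)
lemma murow: "(\<Sum>b\<in>UNIV. mu a b) = m a" using mu by (simp add: couplings'_def couplings_def)
lemma mucol: "(\<Sum>a\<in>UNIV. mu a b) = m b" using mu by (simp add: couplings'_def couplings_def)
lemma M'cond: "(\<Sum>a'\<in>UNIV. cm a' b * Ptr a' a) = D b a"
  using mu by (simp add: couplings'_def D_def cm_def)

lemma cmnn: "0 \<le> cm a b" using munn mnn[of b] by (simp add: cm_def cond_mu_def)
lemma mu_cm: "m b * cm a b = mu a b" using mnn[of b] by (simp add: cm_def cond_mu_def)
lemma cm_sum: "(\<Sum>a\<in>UNIV. cm a b) = 1"
  using mnn[of b] mucol[of b] by (simp add: cm_def cond_mu_def sum_divide_distrib[symmetric])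

lemma pmf_Q0: "pmf (Q0 a) b = mu a b / m a"
  unfolding Q0_def
  apply (rule pmf_embed_finite)
  using munn mnn[of a] murow[of a] by (auto simp: sum_divide_distrib[symmetric])

lemma D_Q1: "D b a * pmf (Q1 b a) b' = Ptr b b' * cm a b'"
proof (cases "D b a > 0")
  case True
  have "pmf (Q1 b a) b' = Ptr b b' * cm a b' / D b a"
    unfolding Q1_def using True
    apply simp
    apply (rule pmf_embed_finite)
    using Pnn cmnn True by (auto simp: sum_divide_distrib[symmetric] D_def mult.commute)
  then show ?thesis using True by simp
next
  case False
  have D0: "D b a = 0" using False Pnn cmnn unfolding D_def
    by (metis (no_types, lifting) mult_nonneg_nonneg order_less_le sum_nonneg)
  have "(\<Sum>b'\<in>UNIV. cm a b' * Ptr b b') = 0" using D0 by (simp add: D_def)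
  then have "\<forall>b'\<in>UNIV. cm a b' * Ptr b b' = 0"
    by (subst (asm) sum_nonneg_eq_0_iff) (auto simp: Pnn cmnn)
  then show ?thesis using D0 by (simp add: mult.commute)
qed

end

context L7 begin

definition N :: "(nat \<Rightarrow> 's) measure" where
  "N = PiM UNIV (\<lambda>j. measure_pmf (Q (from_nat j)))"
definition M :: "('w \<times> (nat \<Rightarrow> 's)) measure" where "M = M0 \<Otimes>\<^sub>M N"

interpretation PN: product_prob_space "\<lambda>j. measure_pmf (Q (from_nat j))" UNIV
  by unfold_locales

lemma probN: "prob_space N" unfolding N_def by (rule prob_space_PiM) (rule prob_space_measure_pmf)

lemma space_N: "space N = UNIV" unfolding N_def by (simp add: space_PiM)

lemma sets_N: "sets N = sets (PiM UNIV (\<lambda>_. count_space UNIV))"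
  unfolding N_def by (intro sets_PiM_cong) auto

interpretation P0: prob_space M0 by (rule P0)
interpretation PNN: prob_space N by (rule probN)
interpretation PM: pair_prob_space M0 N by unfold_locales

lemma probM: "prob_space M" unfolding M_def by unfold_locales

interpretation PMM: prob_space M by (rule probM)

lemma space_M: "space M = space M0 \<times> UNIV"
  unfolding M_def by (simp add: space_pair_measure space_N)

lemma measure_N_cyl:
  assumes "finite J"
  shows "measure N {\<tau>\<in>space N. \<forall>t\<in>J. \<tau> (to_nat t) = d t} = (\<Prod>t\<in>J. pmf (Q t) (d t))"
proof -
  have "{\<tau>\<in>space N. \<forall>t\<in>J. \<tau> (to_nat t) = d t}
     = {\<tau>\<in>space N. \<forall>j\<in>to_nat ` J. \<tau> j \<in> {d (from_nat j)}}" by auto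
  then have "emeasure N {\<tau>\<in>space N. \<forall>t\<in>J. \<tau> (to_nat t) = d t}
     = (\<Prod>j\<in>to_nat ` J. emeasure (measure_pmf (Q (from_nat j))) {d (from_nat j)})"
    unfolding N_def using assms PN.emeasure_PiM_Collect[of "to_nat ` J" "\<lambda>j. {d (from_nat j)}"] by simp
  also have "\<dots> = (\<Prod>t\<in>J. ennreal (pmf (Q t) (d t)))"
    by (subst prod.reindex) (auto simp: inj_on_def emeasure_pmf_single)
  also have "\<dots> = ennreal (\<Prod>t\<in>J. pmf (Q t) (d t))" by (simp add: prod_ennreal)
  finally show ?thesis by (simp add: PNN.emeasure_eq_measure prod_nonneg)
qed

lemma s_meas[measurable]: "s n \<in> measurable M0 (count_space UNIV)" using smeas by simp

lemma meas_S[measurable]: "(\<lambda>z. s n (fst z)) \<in> measurable M (count_space UNIV)"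
  unfolding M_def by measurable

lemma meas_coordN[measurable]: "(\<lambda>\<tau>. \<tau> j) \<in> measurable N (count_space UNIV)"
proof -
  have "(\<lambda>\<tau>. \<tau> j) \<in> measurable N (measure_pmf (Q (from_nat j)))"
    unfolding N_def by (rule measurable_component_singleton) simp
  then show ?thesis
    using measurable_cong_sets[of N N "measure_pmf (Q (from_nat j))" "count_space UNIV"] by simp
qed

lemma meas_coord[measurable]: "(\<lambda>z. snd z j) \<in> measurable M (count_space UNIV)"
proof -
  have "(\<lambda>\<tau>. \<tau> j) \<in> measurable N (measure_pmf (Q (from_nat j)))"
    unfolding N_def by (rule measurable_component_singleton) simp
  then have "(\<lambda>\<tau>. \<tau> j) \<in> measurable N (count_space UNIV)"
    using measurable_cong_sets[of N N "measure_pmf (Q (from_nat j))" "count_space UNIV"] by simp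
  then show ?thesis unfolding M_def by measurable
qed

lemma meas_T[measurable]: "tt s n \<in> measurable M (count_space UNIV)"
proof (induction n)
  case 0
  show ?case
    by (simp only: tt.simps, rule measurable_compose_countable[where f="\<lambda>a z. snd z (to_nat (0::nat, a, a))" and g="\<lambda>z. s 0 (fst z)"]) measurable
next
  case (Suc n)
  have "(\<lambda>z. snd z (to_nat (Suc n, tt s n z, s (Suc n) (fst z)))) \<in> measurable M (count_space UNIV)"
  proof (rule measurable_compose_countable[where f="\<lambda>b z. snd z (to_nat (Suc n, b, s (Suc n) (fst z)))" and g="tt s n"])
    fix b
    show "(\<lambda>z. snd z (to_nat (Suc n, b, s (Suc n) (fst z)))) \<in> measurable M (count_space UNIV)"
      by (rule measurable_compose_countable[where f="\<lambda>a z. snd z (to_nat (Suc n, b, a))" and g="\<lambda>z. s (Suc n) (fst z)"]) measurable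
  qed (rule Suc)
  then show ?case by (simp add: fun_eq_iff)
qed

end

context L7 begin

interpretation P0: prob_space M0 by (rule P0)
interpretation PNN: prob_space N by (rule probN)
interpretation PMM: prob_space M by (rule probM)

lemma measure_M_times:
  assumes "A \<in> sets M0" "B \<in> sets N"
  shows "measure M (A \<times> B) = measure M0 A * measure N B"
proof -
  have "emeasure M (A \<times> B) = emeasure M0 A * emeasure N B"
    unfolding M_def using assms by (rule PNN.emeasure_pair_measure_Times)
  then have "ennreal (measure M (A \<times> B)) = ennreal (measure M0 A * measure N B)"
    by (simp add: PMM.emeasure_eq_measure P0.emeasure_eq_measure PNN.emeasure_eq_measure ennreal_mult)
  then show ?thesis by (simp add: ennreal_inj)
qed

definition V where "V l n a b = m (b l) * (\<Prod>i\<in>{l..<n}. Ptr (b i) (b (Suc i))) * cm a (b n)"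
definition cp where "cp a c k = (\<Prod>j<k. Ptr (case_nat a c j) (c j))"
definition Ev where "Ev n l a b k c J d = {z\<in>space M. s n (fst z) = a \<and> (\<forall>i\<in>{l..n}. tt s i z = b i)
   \<and> (\<forall>j<k. s (Suc n + j) (fst z) = c j) \<and> (\<forall>t\<in>J. snd z (to_nat t) = d t)}"

lemma Ev_sets[measurable]: "finite J \<Longrightarrow> Ev n l a b k c J d \<in> sets M"
  unfolding Ev_def by measurable

lemma cp_Suc: "cp x (case_nat a' c) (Suc k) = Ptr x a' * cp a' c k"
  unfolding cp_def by (simp only: prod.lessThan_Suc_shift) simp

lemma base:
  assumes "finite J" "\<forall>t\<in>J. fst t > 0"
  shows "measure M (Ev 0 0 a b k c J d) = V 0 0 a b * cp a c k * (\<Prod>t\<in>J. pmf (Q t) (d t))"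
proof -
  define A where "A = {\<omega>\<in>space M0. \<forall>i\<le>k. s i \<omega> = case_nat a c i}"
  define d' where "d' = d((0,a,a) := b 0)"
  define B where "B = {\<tau>\<in>space N. \<forall>t\<in>insert (0,a,a) J. \<tau> (to_nat t) = d' t}"
  have nJ: "(0,a,a) \<notin> J" using assms by auto
  have A: "A \<in> sets M0" unfolding A_def by measurable
  have B: "B \<in> sets N" unfolding B_def by measurable
  have eq: "Ev 0 0 a b k c J d = A \<times> B"
  proof (intro set_eqI iffI)
    fix z assume z: "z \<in> Ev 0 0 a b k c J d"
    obtain \<omega> \<tau> where zz: "z = (\<omega>, \<tau>)" by force
    have "\<forall>i\<le>k. s i \<omega> = case_nat a c i"
    proof (intro allI impI)
      fix i assume "i \<le> k" then show "s i \<omega> = case_nat a c i"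
        using z by (cases i) (auto simp: Ev_def zz)
    qed
    then have "\<omega> \<in> A" using z by (auto simp: A_def Ev_def zz space_M)
    moreover have "\<tau> \<in> B" using z nJ by (auto simp: B_def Ev_def zz space_N d'_def)
    ultimately show "z \<in> A \<times> B" by (simp add: zz)
  next
    fix z assume z: "z \<in> A \<times> B"
    obtain \<omega> \<tau> where zz: "z = (\<omega>, \<tau>)" by force
    have s0: "s 0 \<omega> = a" using z by (auto simp: A_def zz)
    have "\<forall>j<k. s (Suc j) \<omega> = c j" using z by (auto simp: A_def zz)
    moreover have "\<tau> (to_nat (0::nat, a, a)) = b 0" using z by (auto simp: B_def zz d'_def)
    moreover have "\<forall>t\<in>J. \<tau> (to_nat t) = d t" using z nJ by (auto simp: B_def zz d'_def split: if_splits)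
    ultimately show "z \<in> Ev 0 0 a b k c J d" using z s0
      by (auto simp: Ev_def zz space_M A_def)
  qed
  have mA: "measure M0 A = m a * cp a c k"
    using chain unfolding markov_chain_law_def A_def cp_def
    by (drule_tac x=k in spec, drule_tac x="case_nat a c" in spec) simp
  have "measure N B = (\<Prod>t\<in>insert (0,a,a) J. pmf (Q t) (d' t))"
    unfolding B_def using assms by (intro measure_N_cyl) simp
  also have "\<dots> = pmf (Q0 a) (b 0) * (\<Prod>t\<in>J. pmf (Q t) (d t))"
  proof -
    have "(\<Prod>t\<in>J. pmf (Q t) (d' t)) = (\<Prod>t\<in>J. pmf (Q t) (d t))"
      using nJ by (intro prod.cong) (auto simp: d'_def)
    then show ?thesis using assms(1) nJ by (simp add: d'_def Q_def)
  qed
  finally have mB: "measure N B = mu a (b 0) / m a * (\<Prod>t\<in>J. pmf (Q t) (d t))"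
    by (simp add: pmf_Q0)
  show ?thesis
    unfolding eq measure_M_times[OF A B] mA mB V_def
    using mnn[of a] mu_cm[of "b 0" a] by (simp add: field_simps)
qed

end

context L7 begin

interpretation PMM: prob_space M by (rule probM)

lemma prodJ_upd:
  assumes "finite J" "t0 \<notin> J"
  shows "(\<Prod>t\<in>insert t0 J. pmf (Q t) ((d(t0 := v)) t)) = pmf (Q t0) v * (\<Prod>t\<in>J. pmf (Q t) (d t))"
proof -
  have "(\<Prod>t\<in>J. pmf (Q t) ((d(t0 := v)) t)) = (\<Prod>t\<in>J. pmf (Q t) (d t))"
    using assms by (intro prod.cong) auto
  then show ?thesis using assms by simp
qed

lemma sumV: "(\<Sum>x\<in>UNIV. V l n x b * Ptr x a') = m (b l) * (\<Prod>i\<in>{l..<n}. Ptr (b i) (b (Suc i))) * D (b n) a'"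
  unfolding V_def M'cond[symmetric] by (simp add: sum_distrib_left mult.assoc)

lemma step_le:
  assumes IH: "\<And>l a b k c J d. l \<le> n \<Longrightarrow> finite J \<Longrightarrow> \<forall>t\<in>J. fst t > n \<Longrightarrow>
      measure M (Ev n l a b k c J d) = V l n a b * cp a c k * (\<Prod>t\<in>J. pmf (Q t) (d t))"
    and l: "l \<le> n" and J: "finite J" "\<forall>t\<in>J. fst t > Suc n"
  shows "measure M (Ev (Suc n) l a' b k c J d) = V l (Suc n) a' b * cp a' c k * (\<Prod>t\<in>J. pmf (Q t) (d t))"
proof -
  define new where "new = (Suc n, b n, a')"
  define d' where "d' = d(new := b (Suc n))"
  define E where "E x = Ev n l x b (Suc k) (case_nat a' c) (insert new J) d'" for x
  have nJ: "new \<notin> J" using J by (auto simp: new_def)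
  have eq: "Ev (Suc n) l a' b k c J d = (\<Union>x\<in>UNIV. E x)"
  proof (intro set_eqI iffI)
    fix z assume z: "z \<in> Ev (Suc n) l a' b k c J d"
    have all: "\<forall>i\<in>{l..Suc n}. tt s i z = b i" using z by (simp add: Ev_def)
    have tn: "tt s n z = b n" using all l by (auto simp del: tt.simps)
    have t1: "tt s (Suc n) z = b (Suc n)" using all l by (auto simp del: tt.simps)
    have s1: "s (Suc n) (fst z) = a'" using z by (auto simp: Ev_def)
    have "\<forall>j<Suc k. s (Suc n + j) (fst z) = case_nat a' c j"
    proof (intro allI impI)
      fix j assume "j < Suc k" then show "s (Suc n + j) (fst z) = case_nat a' c j"
        using z s1 by (cases j) (auto simp: Ev_def)
    qed
    moreover have "\<forall>t\<in>insert new J. snd z (to_nat t) = d' t"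
      using z nJ t1 tn s1 by (auto simp: Ev_def d'_def new_def)
    ultimately have "z \<in> E (s n (fst z))" using z by (auto simp: E_def Ev_def)
    then show "z \<in> (\<Union>x\<in>UNIV. E x)" by blast
  next
    fix z assume "z \<in> (\<Union>x\<in>UNIV. E x)"
    then obtain x where z: "z \<in> E x" by blast
    have s1: "s (Suc n) (fst z) = a'" using z by (auto simp: E_def Ev_def)
    have fut: "\<forall>j<k. s (Suc (Suc n) + j) (fst z) = c j"
    proof (intro allI impI)
      fix j assume "j < k" then show "s (Suc (Suc n) + j) (fst z) = c j"
        using z by (auto simp: E_def Ev_def dest!: spec[where x="Suc j"])
    qed
    have tn: "tt s n z = b n" using z l by (auto simp: E_def Ev_def)
    have nw: "snd z (to_nat new) = b (Suc n)" using z by (auto simp: E_def Ev_def d'_def)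
    have t1: "tt s (Suc n) z = b (Suc n)" using nw tn s1 by (simp add: new_def)
    have "\<forall>i\<in>{l..Suc n}. tt s i z = b i"
    proof
      fix i assume "i \<in> {l..Suc n}"
      then show "tt s i z = b i"
        using z t1 by (cases "i = Suc n") (auto simp: E_def Ev_def)
    qed
    moreover have "\<forall>t\<in>J. snd z (to_nat t) = d t" using z nJ
      by (auto simp: E_def Ev_def d'_def split: if_splits)
    ultimately show "z \<in> Ev (Suc n) l a' b k c J d" using z s1 fut by (auto simp: E_def Ev_def)
  qed
  have disj: "disjoint_family_on E UNIV"
    unfolding disjoint_family_on_def E_def Ev_def by auto
  have "measure M (Ev (Suc n) l a' b k c J d) = (\<Sum>x\<in>UNIV. measure M (E x))"
    unfolding eq using J disj by (intro PMM.finite_measure_finite_Union) (auto simp: E_def[abs_def] simp del: Ev_def)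
  also have "\<dots> = (\<Sum>x\<in>UNIV. V l n x b * (Ptr x a' * cp a' c k) * (pmf (Q1 (b n) a') (b (Suc n)) * (\<Prod>t\<in>J. pmf (Q t) (d t))))"
  proof (intro sum.cong refl)
    fix x
    have "measure M (E x) = V l n x b * cp x (case_nat a' c) (Suc k) * (\<Prod>t\<in>insert new J. pmf (Q t) (d' t))"
      unfolding E_def using l J by (intro IH) (auto simp: new_def)
    also have "\<dots> = V l n x b * (Ptr x a' * cp a' c k) * (pmf (Q1 (b n) a') (b (Suc n)) * (\<Prod>t\<in>J. pmf (Q t) (d t)))"
      unfolding cp_Suc d'_def using prodJ_upd[OF J(1) nJ] by (simp add: new_def Q_def)
    finally show "measure M (E x) = \<dots>" .
  qed
  also have "\<dots> = (\<Sum>x\<in>UNIV. V l n x b * Ptr x a') * pmf (Q1 (b n) a') (b (Suc n)) * cp a' c k * (\<Prod>t\<in>J. pmf (Q t) (d t))"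
    by (simp add: sum_distrib_right sum_distrib_left mult_ac)
  also have "\<dots> = m (b l) * (\<Prod>i\<in>{l..<n}. Ptr (b i) (b (Suc i))) * (D (b n) a' * pmf (Q1 (b n) a') (b (Suc n))) * cp a' c k * (\<Prod>t\<in>J. pmf (Q t) (d t))"
    unfolding sumV by (simp add: mult_ac)
  also have "\<dots> = V l (Suc n) a' b * cp a' c k * (\<Prod>t\<in>J. pmf (Q t) (d t))"
    unfolding D_Q1 V_def using l by (simp add: prod.atLeastLessThan_Suc mult_ac)
  finally show ?thesis .
qed

end

context L7 begin

interpretation PMM: prob_space M by (rule probM)

lemma sum_pairs0: "(\<Sum>p\<in>(UNIV::('s\<times>'s) set). g (fst p) (snd p)) = (\<Sum>y\<in>UNIV. \<Sum>x\<in>UNIV. g x y)"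
proof -
  have "(\<Sum>p\<in>(UNIV::('s\<times>'s) set). g (fst p) (snd p)) = (\<Sum>x\<in>UNIV. \<Sum>y\<in>UNIV. g x y)"
  proof -
    have "(\<Sum>p\<in>(UNIV::('s\<times>'s) set). g (fst p) (snd p)) = (\<Sum>p\<in>(UNIV::'s set) \<times> (UNIV::'s set). g (fst p) (snd p))"
      by simp
    also have "\<dots> = (\<Sum>x\<in>UNIV. \<Sum>y\<in>UNIV. g x y)"
      by (simp only: sum.cartesian_product case_prod_beta')
    finally show ?thesis .
  qed
  then show ?thesis by (rule trans) (rule sum.swap)
qed

lemma sum_pairs: "(\<Sum>p\<in>(UNIV::('s\<times>'s) set). f p) = (\<Sum>y\<in>UNIV. \<Sum>x\<in>UNIV. f (x, y))"
  using sum_pairs0[of "\<lambda>x y. f (x, y)"] by simp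

lemma step_eq:
  assumes IH: "\<And>l a b k c J d. l \<le> n \<Longrightarrow> finite J \<Longrightarrow> \<forall>t\<in>J. fst t > n \<Longrightarrow>
      measure M (Ev n l a b k c J d) = V l n a b * cp a c k * (\<Prod>t\<in>J. pmf (Q t) (d t))"
    and J: "finite J" "\<forall>t\<in>J. fst t > Suc n"
  shows "measure M (Ev (Suc n) (Suc n) a' b k c J d) = V (Suc n) (Suc n) a' b * cp a' c k * (\<Prod>t\<in>J. pmf (Q t) (d t))"
proof -
  define new where "new y = (Suc n, y, a')" for y :: 's
  define d' where "d' y = d(new y := b (Suc n))" for y
  define E where "E p = Ev n n (fst p) (b(n := snd p)) (Suc k) (case_nat a' c) (insert (new (snd p)) J) (d' (snd p))" for p
  have nJ: "new y \<notin> J" for y using J by (auto simp: new_def)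
  have eq: "Ev (Suc n) (Suc n) a' b k c J d = (\<Union>p\<in>UNIV. E p)"
  proof (intro set_eqI iffI)
    fix z assume z: "z \<in> Ev (Suc n) (Suc n) a' b k c J d"
    have t1: "tt s (Suc n) z = b (Suc n)" using z by (simp add: Ev_def del: tt.simps)
    have s1: "s (Suc n) (fst z) = a'" using z by (auto simp: Ev_def)
    have "\<forall>j<Suc k. s (Suc n + j) (fst z) = case_nat a' c j"
    proof (intro allI impI)
      fix j assume "j < Suc k" then show "s (Suc n + j) (fst z) = case_nat a' c j"
        using z s1 by (cases j) (auto simp: Ev_def)
    qed
    moreover have "\<forall>t\<in>insert (new (tt s n z)) J. snd z (to_nat t) = d' (tt s n z) t"
      using z nJ t1 s1 by (auto simp: Ev_def d'_def new_def)
    ultimately have "z \<in> E (s n (fst z), tt s n z)" using z by (auto simp: E_def Ev_def)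
    then show "z \<in> (\<Union>p\<in>UNIV. E p)" by blast
  next
    fix z assume "z \<in> (\<Union>p\<in>UNIV. E p)"
    then obtain x y where z: "z \<in> E (x, y)" by auto
    have s1: "s (Suc n) (fst z) = a'" using z by (auto simp: E_def Ev_def)
    have fut: "\<forall>j<k. s (Suc (Suc n) + j) (fst z) = c j"
    proof (intro allI impI)
      fix j assume "j < k" then show "s (Suc (Suc n) + j) (fst z) = c j"
        using z by (auto simp: E_def Ev_def dest!: spec[where x="Suc j"])
    qed
    have tn: "tt s n z = y" using z by (auto simp: E_def Ev_def)
    have nw: "snd z (to_nat (new y)) = b (Suc n)" using z by (auto simp: E_def Ev_def d'_def)
    have t1: "tt s (Suc n) z = b (Suc n)" using nw tn s1 by (simp add: new_def)
    moreover have "\<forall>t\<in>J. snd z (to_nat t) = d t" using z nJ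
      by (auto simp: E_def Ev_def d'_def split: if_splits)
    ultimately show "z \<in> Ev (Suc n) (Suc n) a' b k c J d" using z s1 fut
      by (auto simp: E_def Ev_def simp del: tt.simps)
  qed
  have disj: "disjoint_family_on E UNIV"
    unfolding disjoint_family_on_def E_def Ev_def by (auto simp del: tt.simps)
  have "measure M (Ev (Suc n) (Suc n) a' b k c J d) = (\<Sum>p\<in>UNIV. measure M (E p))"
    unfolding eq using J disj by (intro PMM.finite_measure_finite_Union) (auto simp: E_def[abs_def] simp del: Ev_def)
  also have "\<dots> = (\<Sum>p\<in>UNIV. (m (snd p) * cm (fst p) (snd p)) * (Ptr (fst p) a' * cp a' c k) * (pmf (Q1 (snd p) a') (b (Suc n)) * (\<Prod>t\<in>J. pmf (Q t) (d t))))"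
  proof (intro sum.cong refl)
    fix p :: "'s \<times> 's"
    have gen: "measure M (E (x, y)) = (m y * cm x y) * (Ptr x a' * cp a' c k) * (pmf (Q1 y a') (b (Suc n)) * (\<Prod>t\<in>J. pmf (Q t) (d t)))" for x y
    proof -
      have "measure M (E (x, y)) = V n n x (b(n := y)) * cp x (case_nat a' c) (Suc k) * (\<Prod>t\<in>insert (new y) J. pmf (Q t) (d' y t))"
        unfolding E_def fst_conv snd_conv using J by (intro IH) (auto simp: new_def)
      also have "(\<Prod>t\<in>insert (new y) J. pmf (Q t) (d' y t)) = pmf (Q1 y a') (b (Suc n)) * (\<Prod>t\<in>J. pmf (Q t) (d t))"
        unfolding d'_def using prodJ_upd[OF J(1) nJ] by (simp add: new_def Q_def)
      also have "V n n x (b(n := y)) = m y * cm x y" by (simp add: V_def)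
      finally show ?thesis unfolding cp_Suc .
    qed
    show "measure M (E p) = (m (snd p) * cm (fst p) (snd p)) * (Ptr (fst p) a' * cp a' c k) * (pmf (Q1 (snd p) a') (b (Suc n)) * (\<Prod>t\<in>J. pmf (Q t) (d t)))"
      using gen[of "fst p" "snd p"] unfolding prod.collapse .
  qed
  also have "\<dots> = (\<Sum>y\<in>UNIV. m y * (\<Sum>x\<in>UNIV. cm x y * Ptr x a') * pmf (Q1 y a') (b (Suc n))) * cp a' c k * (\<Prod>t\<in>J. pmf (Q t) (d t))"
    unfolding sum_pairs fst_conv snd_conv sum_distrib_right sum_distrib_left
    by (intro sum.cong refl) (simp add: ac_simps)
  also have "\<dots> = (\<Sum>y\<in>UNIV. m y * Ptr y (b (Suc n))) * cm a' (b (Suc n)) * cp a' c k * (\<Prod>t\<in>J. pmf (Q t) (d t))"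
  proof -
    have h: "m y * (\<Sum>x\<in>UNIV. cm x y * Ptr x a') * pmf (Q1 y a') (b (Suc n)) = m y * Ptr y (b (Suc n)) * cm a' (b (Suc n))" for y
      using D_Q1[of y a' "b (Suc n)"] unfolding M'cond by (simp add: mult.assoc)
    have "(\<Sum>y\<in>UNIV. m y * (\<Sum>x\<in>UNIV. cm x y * Ptr x a') * pmf (Q1 y a') (b (Suc n))) = (\<Sum>y\<in>UNIV. m y * Ptr y (b (Suc n))) * cm a' (b (Suc n))"
      unfolding sum_distrib_right by (intro sum.cong refl h)
    then show ?thesis by simp
  qed
  also have "\<dots> = V (Suc n) (Suc n) a' b * cp a' c k * (\<Prod>t\<in>J. pmf (Q t) (d t))"
    unfolding minv V_def by simp
  finally show ?thesis .
qed

lemma main: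
  "l \<le> n \<Longrightarrow> finite J \<Longrightarrow> \<forall>t\<in>J. fst t > n \<Longrightarrow>
      measure M (Ev n l a b k c J d) = V l n a b * cp a c k * (\<Prod>t\<in>J. pmf (Q t) (d t))"
proof (induction n arbitrary: l a b k c J d)
  case 0
  have l0: "l = 0" using 0 by simp
  have "measure M (Ev 0 0 a b k c J d) = V 0 0 a b * cp a c k * (\<Prod>t\<in>J. pmf (Q t) (d t))"
    using 0(2,3) by (rule base)
  then show ?case unfolding l0 .
next
  case (Suc n)
  show ?case
  proof (cases "l \<le> n")
    case True
    show ?thesis by (rule step_le[OF Suc.IH True Suc.prems(2,3)])
  next
    case False
    then have "l = Suc n" using Suc.prems by simp
    then show ?thesis using step_eq[OF Suc.IH Suc.prems(2,3)] by (simp only:)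
  qed
qed

end

context L7 begin

interpretation P0: prob_space M0 by (rule P0)
interpretation PNN: prob_space N by (rule probN)
interpretation PMM: prob_space M by (rule probM)

lemma split_fun:
  fixes f :: "_ \<Rightarrow> 'b::finite"
  assumes f: "f \<in> measurable M (count_space UNIV)" and A: "A \<in> sets M"
  shows "measure M A = (\<Sum>y\<in>UNIV. measure M {z\<in>A. f z = y})"
proof -
  have "A = (\<Union>y\<in>UNIV. {z\<in>A. f z = y})" by auto
  moreover have "{z\<in>A. f z = y} \<in> sets M" for y
  proof -
    have "{z\<in>A. f z = y} = A \<inter> (f -` {y} \<inter> space M)" using sets.sets_into_space[OF A] by auto
    then show ?thesis using A f by (simp add: sets.Int measurable_sets)
  qed
  moreover have "disjoint_family_on (\<lambda>y. {z\<in>A. f z = y}) UNIV"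
    by (auto simp: disjoint_family_on_def)
  ultimately have "measure M (\<Union>y\<in>UNIV. {z\<in>A. f z = y}) = (\<Sum>y\<in>UNIV. measure M {z\<in>A. f z = y})"
    by (intro PMM.finite_measure_finite_Union) auto
  moreover have "(\<Union>y\<in>UNIV. {z\<in>A. f z = y}) = A" by auto
  ultimately show ?thesis by simp
qed

lemma F1: "measure M {z\<in>space M. s n (fst z) = a \<and> (\<forall>i\<le>n. tt s i z = b i)}
   = m (b 0) * (\<Prod>i<n. Ptr (b i) (b (Suc i))) * cm a (b n)"
proof -
  have "{z\<in>space M. s n (fst z) = a \<and> (\<forall>i\<le>n. tt s i z = b i)} = Ev n 0 a b 0 (\<lambda>_. a) ({}::(nat\<times>'s\<times>'s) set) (\<lambda>_. a)"
    by (auto simp: Ev_def simp del: tt.simps)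
  then show ?thesis by (simp only:) (subst main, auto simp: V_def cp_def atLeast0LessThan)
qed

lemma setT[measurable]: "{z\<in>space M. \<forall>i\<le>n. tt s i z = b i} \<in> sets M" by measurable

lemma F2: "measure M {z\<in>space M. \<forall>i\<le>n. tt s i z = b i} = m (b 0) * (\<Prod>i<n. Ptr (b i) (b (Suc i)))"
proof -
  have "measure M {z\<in>space M. \<forall>i\<le>n. tt s i z = b i}
     = (\<Sum>a\<in>UNIV. measure M {z\<in>{z\<in>space M. \<forall>i\<le>n. tt s i z = b i}. s n (fst z) = a})"
    by (rule split_fun) measurable
  also have "\<dots> = (\<Sum>a\<in>UNIV. m (b 0) * (\<Prod>i<n. Ptr (b i) (b (Suc i))) * cm a (b n))"
  proof (intro sum.cong refl)
    fix a
    have e: "{z\<in>{z\<in>space M. \<forall>i\<le>n. tt s i z = b i}. s n (fst z) = a} = {z\<in>space M. s n (fst z) = a \<and> (\<forall>i\<le>n. tt s i z = b i)}"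
      by (auto simp del: tt.simps)
    show "measure M {z\<in>{z\<in>space M. \<forall>i\<le>n. tt s i z = b i}. s n (fst z) = a} = m (b 0) * (\<Prod>i<n. Ptr (b i) (b (Suc i))) * cm a (b n)"
      unfolding e by (rule F1)
  qed
  also have "\<dots> = m (b 0) * (\<Prod>i<n. Ptr (b i) (b (Suc i)))"
    unfolding sum_distrib_left[symmetric] cm_sum by simp
  finally show ?thesis .
qed

lemma P2: "measure M {z\<in>space M. s n (fst z) = a \<and> tt s n z = b} = mu a b"
proof -
  have "{z\<in>space M. s n (fst z) = a \<and> tt s n z = b} = Ev n n a (\<lambda>_. b) 0 (\<lambda>_. a) ({}::(nat\<times>'s\<times>'s) set) (\<lambda>_. a)"
    by (auto simp: Ev_def simp del: tt.simps)
  then show ?thesis by (simp only:) (subst main, auto simp: V_def cp_def mu_cm)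
qed

lemma P3: "cond_law_prop M (\<lambda>n \<omega>. s n (fst \<omega>)) (tt s) mu m"
  unfolding cond_law_prop_def F1 F2 by (simp add: cm_def)

lemma Sfut: "measure M {z\<in>space M. s n (fst z) = a \<and> (\<forall>j<k. s (Suc n + j) (fst z) = c j)} = m a * cp a c k"
proof -
  have "measure M {z\<in>space M. s n (fst z) = a \<and> (\<forall>j<k. s (Suc n + j) (fst z) = c j)}
     = (\<Sum>y\<in>UNIV. measure M {z\<in>{z\<in>space M. s n (fst z) = a \<and> (\<forall>j<k. s (Suc n + j) (fst z) = c j)}. tt s n z = y})"
    by (rule split_fun) measurable
  also have "\<dots> = (\<Sum>y\<in>UNIV. mu a y * cp a c k)"
  proof (intro sum.cong refl)
    fix y
    have "{z\<in>{z\<in>space M. s n (fst z) = a \<and> (\<forall>j<k. s (Suc n + j) (fst z) = c j)}. tt s n z = y} = Ev n n a (\<lambda>_. y) k c ({}::(nat\<times>'s\<times>'s) set) (\<lambda>_. a)"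
      by (auto simp: Ev_def simp del: tt.simps)
    then show "measure M {z\<in>{z\<in>space M. s n (fst z) = a \<and> (\<forall>j<k. s (Suc n + j) (fst z) = c j)}. tt s n z = y} = mu a y * cp a c k"
      by (simp only:) (subst main, auto simp: V_def mu_cm)
  qed
  also have "\<dots> = m a * cp a c k" unfolding sum_distrib_right[symmetric] murow ..
  finally show ?thesis .
qed

lemma P4: "cond_indep_prop M (\<lambda>n \<omega>. s n (fst \<omega>)) (tt s)"
  unfolding cond_indep_prop_def
proof (intro allI)
  fix n k a and b c :: "nat \<Rightarrow> 's"
  have X: "measure M {z\<in>space M. s n (fst z) = a \<and> (\<forall>i\<le>n. tt s i z = b i) \<and> (\<forall>j<k. s (Suc n + j) (fst z) = c j)}
     = V 0 n a b * cp a c k"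
  proof -
    have "{z\<in>space M. s n (fst z) = a \<and> (\<forall>i\<le>n. tt s i z = b i) \<and> (\<forall>j<k. s (Suc n + j) (fst z) = c j)} = Ev n 0 a b k c ({}::(nat\<times>'s\<times>'s) set) (\<lambda>_. a)"
      by (auto simp: Ev_def simp del: tt.simps)
    then show ?thesis by (simp only:) (subst main, auto)
  qed
  have Z: "measure M {z\<in>space M. s n (fst z) = a \<and> (\<forall>i\<le>n. tt s i z = b i)} = V 0 n a b"
    using F1 by (simp add: V_def atLeast0LessThan)
  have Y: "measure M {z\<in>space M. s n (fst z) = a} = m a"
    using Sfut[of n a 0 c] by (simp add: cp_def)
  show "measure M {z\<in>space M. s n (fst z) = a \<and> (\<forall>i\<le>n. tt s i z = b i) \<and> (\<forall>j<k. s (Suc n + j) (fst z) = c j)} *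
          measure M {z\<in>space M. s n (fst z) = a} =
        measure M {z\<in>space M. s n (fst z) = a \<and> (\<forall>i\<le>n. tt s i z = b i)} *
        measure M {z\<in>space M. s n (fst z) = a \<and> (\<forall>j<k. s (Suc n + j) (fst z) = c j)}"
    unfolding X Y Z Sfut by (simp only: mult_ac)
qed

end

context L7 begin

interpretation P0: prob_space M0 by (rule P0)
interpretation PNN: prob_space N by (rule probN)
interpretation PMM: prob_space M by (rule probM)

lemma decomp:
  fixes X :: "nat \<Rightarrow> _ \<Rightarrow> 's"
  assumes Xm: "\<And>i. X i \<in> measurable M (count_space UNIV)" and J: "J \<subseteq> {..n}"
  shows "measure M {z\<in>space M. \<forall>i\<in>J. X i z \<in> A i}
     = (\<Sum>b\<in>{b\<in>PiE {..n} (\<lambda>_. UNIV). \<forall>i\<in>J. b i \<in> A i}. measure M {z\<in>space M. \<forall>i\<le>n. X i z = b i})"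
proof -
  note [measurable] = Xm
  define B where "B = {b\<in>PiE {..n} (\<lambda>_. UNIV::'s set). \<forall>i\<in>J. b i \<in> A i}"
  have fin: "finite B"
  proof -
    have "B \<subseteq> PiE {..n} (\<lambda>_. UNIV::'s set)" unfolding B_def by blast
    moreover have "finite (PiE {..n} (\<lambda>_. UNIV::'s set))" by (rule finite_PiE) auto
    ultimately show ?thesis by (rule finite_subset)
  qed
  have eq: "{z\<in>space M. \<forall>i\<in>J. X i z \<in> A i} = (\<Union>b\<in>B. {z\<in>space M. \<forall>i\<le>n. X i z = b i})"
  proof (intro set_eqI iffI)
    fix z assume z: "z \<in> {z\<in>space M. \<forall>i\<in>J. X i z \<in> A i}"
    define b where "b = restrict (\<lambda>i. X i z) {..n}"
    have "b \<in> B" using z J unfolding B_def b_def by auto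
    moreover have "z \<in> {z\<in>space M. \<forall>i\<le>n. X i z = b i}" using z by (auto simp: b_def)
    ultimately show "z \<in> (\<Union>b\<in>B. {z\<in>space M. \<forall>i\<le>n. X i z = b i})" by blast
  next
    fix z assume "z \<in> (\<Union>b\<in>B. {z\<in>space M. \<forall>i\<le>n. X i z = b i})"
    then obtain b where b: "b \<in> B" and z: "z \<in> space M" "\<forall>i\<le>n. X i z = b i" by auto
    show "z \<in> {z\<in>space M. \<forall>i\<in>J. X i z \<in> A i}" using b z J unfolding B_def by auto
  qed
  have disj: "disjoint_family_on (\<lambda>b. {z\<in>space M. \<forall>i\<le>n. X i z = b i}) B"
  proof (unfold disjoint_family_on_def, intro ballI impI)
    fix b b' assume bb: "b \<in> B" "b' \<in> B" "b \<noteq> b'"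
    have "\<exists>i\<le>n. b i \<noteq> b' i"
    proof (rule ccontr)
      assume "\<not> (\<exists>i\<le>n. b i \<noteq> b' i)"
      then have "b i = b' i" for i
        using bb PiE_arb[of b "{..n}" "\<lambda>_. UNIV" i] PiE_arb[of b' "{..n}" "\<lambda>_. UNIV" i]
        unfolding B_def by (cases "i \<le> n") auto
      then show False using bb by auto
    qed
    then show "{z\<in>space M. \<forall>i\<le>n. X i z = b i} \<inter> {z\<in>space M. \<forall>i\<le>n. X i z = b' i} = {}" by auto
  qed
  have "measure M (\<Union>b\<in>B. {z\<in>space M. \<forall>i\<le>n. X i z = b i}) = (\<Sum>b\<in>B. measure M {z\<in>space M. \<forall>i\<le>n. X i z = b i})"
    using fin disj by (intro PMM.finite_measure_finite_Union) auto
  then show ?thesis unfolding eq B_def .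
qed

lemma fd_S: "measure M {z\<in>space M. \<forall>i\<le>n. s i (fst z) = b i} = m (b 0) * (\<Prod>i<n. Ptr (b i) (b (Suc i)))"
proof -
  define A0 where "A0 = {\<omega>\<in>space M0. \<forall>i\<le>n. s i \<omega> = b i}"
  have A0: "A0 \<in> sets M0" unfolding A0_def by measurable
  have "{z\<in>space M. \<forall>i\<le>n. s i (fst z) = b i} = A0 \<times> space N"
    by (auto simp: space_M space_N A0_def)
  then have "measure M {z\<in>space M. \<forall>i\<le>n. s i (fst z) = b i} = measure M0 A0 * measure N (space N)"
    using measure_M_times[OF A0 sets.top] by simp
  also have "\<dots> = measure M0 A0" by (simp add: PNN.prob_space)
  also have "\<dots> = m (b 0) * (\<Prod>i<n. Ptr (b i) (b (Suc i)))"
    using chain unfolding markov_chain_law_def A0_def by simp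
  finally show ?thesis .
qed

lemma fd_eq: assumes Jn: "J \<subseteq> {..n}"
  shows "measure M {z\<in>space M. \<forall>i\<in>J. tt s i z \<in> A i} = measure M {z\<in>space M. \<forall>i\<in>J. s i (fst z) \<in> A i}"
proof -
  have "measure M {z\<in>space M. \<forall>i\<in>J. tt s i z \<in> A i}
     = (\<Sum>b\<in>{b\<in>PiE {..n} (\<lambda>_. UNIV). \<forall>i\<in>J. b i \<in> A i}. measure M {z\<in>space M. \<forall>i\<le>n. tt s i z = b i})"
    by (rule decomp[OF meas_T Jn])
  also have "\<dots> = (\<Sum>b\<in>{b\<in>PiE {..n} (\<lambda>_. UNIV). \<forall>i\<in>J. b i \<in> A i}. measure M {z\<in>space M. \<forall>i\<le>n. s i (fst z) = b i})"
    by (intro sum.cong refl) (simp only: F2 fd_S)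
  also have "\<dots> = measure M {z\<in>space M. \<forall>i\<in>J. s i (fst z) \<in> A i}"
    by (rule decomp[of "\<lambda>i z. s i (fst z)", OF meas_S Jn, symmetric])
  finally show ?thesis .
qed

lemma P1: "distr M (Pi\<^sub>M UNIV (\<lambda>_. count_space UNIV)) (\<lambda>\<omega> n. tt s n \<omega>)
  = distr M (Pi\<^sub>M UNIV (\<lambda>_. count_space UNIV)) (\<lambda>\<omega> n. s n (fst \<omega>))"
proof (rule measure_eqI_PiM_infinite)
  show "sets (distr M (Pi\<^sub>M UNIV (\<lambda>_. count_space UNIV)) (\<lambda>\<omega> n. tt s n \<omega>)) = sets (Pi\<^sub>M UNIV (\<lambda>_. count_space UNIV))" by simp
  show "sets (distr M (Pi\<^sub>M UNIV (\<lambda>_. count_space UNIV)) (\<lambda>\<omega> n. s n (fst \<omega>))) = sets (Pi\<^sub>M UNIV (\<lambda>_. count_space UNIV))" by simp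
  have mT: "(\<lambda>\<omega> n. tt s n \<omega>) \<in> measurable M (Pi\<^sub>M UNIV (\<lambda>_. count_space UNIV))"
    by (rule measurable_PiM_single') (auto simp: space_PiM)
  have mS: "(\<lambda>\<omega> n. s n (fst \<omega>)) \<in> measurable M (Pi\<^sub>M UNIV (\<lambda>_. count_space UNIV))"
    by (rule measurable_PiM_single') (auto simp: space_PiM)
  show "finite_measure (distr M (Pi\<^sub>M UNIV (\<lambda>_. count_space UNIV)) (\<lambda>\<omega> n. tt s n \<omega>))"
    using mT by (rule PMM.finite_measure_distr)
  fix A :: "nat \<Rightarrow> 's set" and J :: "nat set"
  assume J: "finite J" "J \<subseteq> UNIV" and A: "\<And>i. i \<in> J \<Longrightarrow> A i \<in> sets (count_space UNIV)"
  define X where "X = prod_emb UNIV (\<lambda>_. count_space UNIV) J (Pi\<^sub>E J A)"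
  have X: "X \<in> sets (Pi\<^sub>M UNIV (\<lambda>_. count_space UNIV))" unfolding X_def using J by (intro sets_PiM_I) auto
  define n where "n = Max (insert 0 J)"
  have Jn: "J \<subseteq> {..n}" using J by (auto simp: n_def)
  have pre: "f -` X \<inter> space M = {z\<in>space M. \<forall>i\<in>J. f z i \<in> A i}" for f :: "_ \<Rightarrow> nat \<Rightarrow> 's"
    by (auto simp: X_def prod_emb_iff PiE_iff)
  have "emeasure (distr M (Pi\<^sub>M UNIV (\<lambda>_. count_space UNIV)) (\<lambda>\<omega> n. tt s n \<omega>)) X
      = emeasure M {z\<in>space M. \<forall>i\<in>J. tt s i z \<in> A i}"
    using emeasure_distr[OF mT X] pre by simp
  also have "\<dots> = emeasure M {z\<in>space M. \<forall>i\<in>J. s i (fst z) \<in> A i}"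
    using fd_eq[OF Jn, of A] by (simp add: PMM.emeasure_eq_measure)
  also have "\<dots> = emeasure (distr M (Pi\<^sub>M UNIV (\<lambda>_. count_space UNIV)) (\<lambda>\<omega> n. s n (fst \<omega>))) X"
    using emeasure_distr[OF mS X] pre by simp
  finally show "emeasure (distr M (Pi\<^sub>M UNIV (\<lambda>_. count_space UNIV)) (\<lambda>\<omega> n. tt s n \<omega>)) (prod_emb UNIV (\<lambda>_. count_space UNIV) J (Pi\<^sub>E J A))
      = emeasure (distr M (Pi\<^sub>M UNIV (\<lambda>_. count_space UNIV)) (\<lambda>\<omega> n. s n (fst \<omega>))) (prod_emb UNIV (\<lambda>_. count_space UNIV) J (Pi\<^sub>E J A))"
    unfolding X_def .
qed

end

theorem lemma7:
  fixes Ptr :: "'s::finite \<Rightarrow> 's \<Rightarrow> real" and m :: "'s \<Rightarrow> real"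
    and mu :: "'s \<Rightarrow> 's \<Rightarrow> real"
    and M0 :: "'w measure" and s :: "nat \<Rightarrow> 'w \<Rightarrow> 's"
  assumes "stochastic Ptr" and "irreducible_chain Ptr" and "aperiodic_chain Ptr"
    and "invariant_distr Ptr m" and "\<forall>x. m x > 0"
    and "prob_space M0"
    and "\<forall>n. s n \<in> measurable M0 (count_space UNIV)"
    and "markov_chain_law M0 s Ptr m"
    and "mu \<in> couplings' Ptr m"
  shows "\<exists>(M :: ('w \<times> (nat \<Rightarrow> 's)) measure) (t :: nat \<Rightarrow> ('w \<times> (nat \<Rightarrow> 's)) \<Rightarrow> 's).
           prob_space M
         \<and> fst \<in> measurable M M0 \<and> distr M M0 fst = M0
         \<and> (\<forall>n. t n \<in> measurable M (count_space UNIV))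
         \<and> distr M (Pi\<^sub>M UNIV (\<lambda>_. count_space UNIV)) (\<lambda>\<omega> n. t n \<omega>)
             = distr M (Pi\<^sub>M UNIV (\<lambda>_. count_space UNIV)) (\<lambda>\<omega> n. s n (fst \<omega>))
         \<and> (\<forall>n a b. measure M {\<omega>\<in>space M. s n (fst \<omega>) = a \<and> t n \<omega> = b} = mu a b)
         \<and> cond_law_prop M (\<lambda>n \<omega>. s n (fst \<omega>)) t mu m
         \<and> cond_indep_prop M (\<lambda>n \<omega>. s n (fst \<omega>)) t"
proof -
  interpret L: L7 Ptr m mu M0 s
    by (rule L7.intro) (fact assms(1), fact assms(4), fact assms(5), fact assms(6), fact assms(7), fact assms(8), fact assms(9))
  have f1: "fst \<in> measurable L.M M0" unfolding L.M_def by (rule measurable_fst)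
  have f2: "distr L.M M0 fst = M0"
    unfolding L.M_def by (rule prob_space.distr_pair_fst[OF L.probN])
  show ?thesis
    apply (rule exI[of _ L.M], rule exI[of _ "tt s"])
    apply (intro conjI allI)
           apply (rule L.probM)
          apply (rule f1)
         apply (rule f2)
        apply (rule L.meas_T)
       apply (rule L.P1)
      apply (rule L.P2)
     apply (rule L.P3)
    apply (rule L.P4)
    done
qed

end
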